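(* Let $m\ge 2$ be an integer and let $n$ be a positive integer with $m^j\le n<m^{j+1}$ for some integer $j\ge 0$, with base $m$ representation $n=\alpha_j m^j+\cdots+\alpha_1 m+\alpha_0$ ($\alpha_j>0$, $0\le\alpha_i\le m-1$). For $1\le i\le j$ let $\chi_i=0$ if $\alpha_{i-1}>0$ and $\chi_i=1$ if $\alpha_{i-1}=0$. Then \[ c_m(mn)\equiv \alpha_0+(\alpha_0-1)\sum_{i=1}^{j}(\alpha_1-\chi_1)(\alpha_2-\chi_2)\cdots(\alpha_i-\chi_i)\pmod m. \]
   Context: An $m$-ary partition of a positive integer $N$ is a partition of $N$ in which every part is a power of $m$. It is without gaps if, whenever $m^i$ is its largest part, every $m^k$ with $0\le k<i$ also appears as a part. $c_m(N)$ denotes the number of $m$-ary partitions of $N$ without gaps. *)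

theory Defs
  imports "HOL-Number_Theory.Cong"
begin

text \<open>An m-ary partition of N is encoded by its multiplicity function f, where f k is the
number of parts equal to m^k (for m \<ge> 2 the powers m^k are distinct, so this is a bijective
encoding).\<close>

definition mary_nogap_partitions :: "nat \<Rightarrow> nat \<Rightarrow> (nat \<Rightarrow> nat) set" where
  "mary_nogap_partitions m N =
     {f. \<exists>i. (\<forall>k\<le>i. 0 < f k) \<and> (\<forall>k>i. f k = 0) \<and> (\<Sum>k\<le>i. f k * m ^ k) = N}"

definition c :: "nat \<Rightarrow> nat \<Rightarrow> nat" where
  "c m N = card (mary_nogap_partitions m N)"

definition digit :: "nat \<Rightarrow> nat \<Rightarrow> nat \<Rightarrow> nat" where
  "digit m n i = n div m ^ i mod m"

definition chi :: "nat \<Rightarrow> nat \<Rightarrow> nat \<Rightarrow> int" where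
  "chi m n i = (if digit m n (i - 1) > 0 then 0 else 1)"

end

theory Submission
  imports Defs
begin


definition pcons :: "nat \<Rightarrow> (nat \<Rightarrow> nat) \<Rightarrow> nat \<Rightarrow> nat" where
  "pcons a g = (\<lambda>t. case t of 0 \<Rightarrow> a | Suc t' \<Rightarrow> g t')"

lemma P0: "mary_nogap_partitions m 0 = {}"
proof -
  have False if a: "\<forall>k\<le>i. 0 < f k" "(\<Sum>k\<le>i. f k * m ^ k) = 0" for f :: "nat \<Rightarrow> nat" and i
  proof -
    have "f 0 * m ^ 0 \<le> (\<Sum>k\<le>i. f k * m ^ k)"
      by (rule member_le_sum) auto
    then show False using a by auto
  qed
  then show ?thesis unfolding mary_nogap_partitions_def by blast
qed

lemma Pdec:
  assumes m: "m \<ge> 2" and N: "N \<ge> 1"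
  shows "mary_nogap_partitions m N = insert (\<lambda>t. if t = 0 then N else 0)
     (\<Union>k\<in>{1..(N-1) div m}. pcons (N - m*k) ` mary_nogap_partitions m k)"
proof (rule set_eqI, rule iffI)
  fix f assume "f \<in> mary_nogap_partitions m N"
  then obtain i where pos: "\<forall>k\<le>i. 0 < f k" and z: "\<forall>k>i. f k = 0"
     and s: "(\<Sum>k\<le>i. f k * m ^ k) = N"
    unfolding mary_nogap_partitions_def by blast
  show "f \<in> insert (\<lambda>t. if t = 0 then N else 0)
     (\<Union>k\<in>{1..(N-1) div m}. pcons (N - m*k) ` mary_nogap_partitions m k)"
  proof (cases i)
    case 0
    then have "f = (\<lambda>t. if t = 0 then N else 0)" using z s by (auto intro!: ext)
    then show ?thesis by simp
  next
    case (Suc i')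
    define g where "g = (\<lambda>t. f (Suc t))"
    define K where "K = (\<Sum>k\<le>i'. g k * m ^ k)"
    have "(\<Sum>k\<le>Suc i'. f k * m^k) = f 0 + m*(\<Sum>k\<le>i'. f (Suc k) * m^k)"
      by (simp del: sum.atMost_Suc add: sum.atMost_Suc_shift sum_distrib_left mult.assoc mult.left_commute)
    then have s2: "N = f 0 + m * K" using s Suc unfolding K_def g_def by simp
    have gP: "g \<in> mary_nogap_partitions m K"
      unfolding mary_nogap_partitions_def K_def g_def using pos z Suc
      by (intro CollectI exI[of _ i']) auto
    have "g 0 * m ^ 0 \<le> K" unfolding K_def by (rule member_le_sum) auto
    moreover have "g 0 > 0" using pos Suc g_def by auto
    ultimately have K1: "K \<ge> 1" by simp
    have "m * K \<le> N - 1" using s2 pos by auto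
    then have K2: "K \<le> (N-1) div m" using m
      by (simp add: less_eq_div_iff_mult_less_eq mult.commute)
    have "f = pcons (N - m*K) g"
      by (rule ext) (auto simp: pcons_def g_def s2 split: nat.split)
    then show ?thesis using K1 K2 gP by auto
  qed
next
  fix f assume "f \<in> insert (\<lambda>t. if t = 0 then N else 0)
     (\<Union>k\<in>{1..(N-1) div m}. pcons (N - m*k) ` mary_nogap_partitions m k)"
  then consider "f = (\<lambda>t. if t = 0 then N else 0)"
    | k g where "k \<in> {1..(N-1) div m}" "g \<in> mary_nogap_partitions m k" "f = pcons (N - m*k) g"
    by auto
  then show "f \<in> mary_nogap_partitions m N"
  proof cases
    case 1
    then show ?thesis unfolding mary_nogap_partitions_def using N
      by (intro CollectI exI[of _ 0]) auto
  next
    case 2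
    then obtain i where pos: "\<forall>k\<le>i. 0 < g k" and z: "\<forall>k>i. g k = 0"
      and s: "(\<Sum>t\<le>i. g t * m ^ t) = k"
      unfolding mary_nogap_partitions_def by blast
    have "k \<le> (N-1) div m" using 2 by auto
    then have mk: "m * k \<le> N - 1" using m
      by (simp add: less_eq_div_iff_mult_less_eq mult.commute)
    show ?thesis unfolding mary_nogap_partitions_def
    proof (intro CollectI exI[of _ "Suc i"] conjI allI impI)
      fix t assume "t \<le> Suc i" then show "0 < f t" using pos mk 2 N
        by (cases t) (auto simp: pcons_def)
    next
      fix t assume "t > Suc i" then show "f t = 0" using z 2
        by (cases t) (auto simp: pcons_def)
    next
      have "(\<Sum>t\<le>Suc i. f t * m ^ t) = (N - m*k) + m * (\<Sum>t\<le>i. g t * m ^ t)"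
        using 2 by (simp del: sum.atMost_Suc add: sum.atMost_Suc_shift sum_distrib_left pcons_def mult.assoc mult.left_commute)
      also have "\<dots> = N" using s mk by simp
      finally show "(\<Sum>t\<le>Suc i. f t * m ^ t) = N" .
    qed
  qed
qed

lemma Pfin: "m \<ge> 2 \<Longrightarrow> finite (mary_nogap_partitions m N)"
proof (induction N rule: less_induct)
  case (less N)
  show ?case
  proof (cases "N = 0")
    case True then show ?thesis by (simp add: P0)
  next
    case False
    have "\<forall>k\<in>{1..(N-1) div m}. k < N"
    proof
      fix k assume "k \<in> {1..(N-1) div m}"
      then have "k \<le> N - 1" using div_le_dividend[of "N-1" m] by (meson atLeastAtMost_iff order_trans)
      then show "k < N" using False by linarith
    qed
    then show ?thesis using Pdec[OF less.prems, of N] less False by auto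
  qed
qed

lemma Pcard:
  assumes m: "m \<ge> 2" and N: "N \<ge> 1"
  shows "c m N = 1 + (\<Sum>k=1..(N-1) div m. c m k)"
proof -
  have inj: "inj (pcons a)" for a
  proof (rule injI)
    fix g1 g2 assume "pcons a g1 = pcons a g2"
    then have "pcons a g1 (Suc t) = pcons a g2 (Suc t)" for t by simp
    then show "g1 = g2" by (auto simp: pcons_def)
  qed
  have mkN: "m * k \<le> N - 1" if "k \<in> {1..(N-1) div m}" for k
    using that m by (simp add: less_eq_div_iff_mult_less_eq mult.commute)
  have disj: "\<forall>i\<in>{1..(N-1) div m}. \<forall>j\<in>{1..(N-1) div m}. i \<noteq> j \<longrightarrow>
     pcons (N - m*i) ` mary_nogap_partitions m i \<inter> pcons (N - m*j) ` mary_nogap_partitions m j = {}"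
  proof (intro ballI impI)
    fix i j assume ij: "i \<in> {1..(N-1) div m}" "j \<in> {1..(N-1) div m}" "i \<noteq> j"
    have "m*i \<noteq> m*j" using ij(3) m by simp
    then have "N - m*i \<noteq> N - m*j" using mkN[OF ij(1)] mkN[OF ij(2)] by linarith
    then show "pcons (N - m*i) ` mary_nogap_partitions m i \<inter> pcons (N - m*j) ` mary_nogap_partitions m j = {}"
    proof (safe)
      fix x xa xb assume "pcons (N - m * i) xa = pcons (N - m * j) xb"
      from fun_cong[OF this, of 0] show "x \<in> {}" using \<open>N - m*i \<noteq> N - m*j\<close>
        by (simp add: pcons_def)
    qed
  qed
  have notin: "(\<lambda>t. if t = 0 then N else 0) \<notin>
     (\<Union>k\<in>{1..(N-1) div m}. pcons (N - m*k) ` mary_nogap_partitions m k)"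
  proof
    assume "(\<lambda>t. if t = 0 then N else 0) \<in>
     (\<Union>k\<in>{1..(N-1) div m}. pcons (N - m*k) ` mary_nogap_partitions m k)"
    then obtain k g where g: "g \<in> mary_nogap_partitions m k"
       and e: "(\<lambda>t. if t = 0 then N else 0) = pcons (N - m*k) g" by auto
    have "g 0 > 0" using g unfolding mary_nogap_partitions_def by auto
    moreover have "g 0 = 0" using fun_cong[OF e, of 1] by (simp add: pcons_def)
    ultimately show False by simp
  qed
  have "c m N = card (insert (\<lambda>t. if t = 0 then N else 0)
     (\<Union>k\<in>{1..(N-1) div m}. pcons (N - m*k) ` mary_nogap_partitions m k))"
    unfolding c_def using Pdec[OF m N] by simp
  also have "\<dots> = 1 + card (\<Union>k\<in>{1..(N-1) div m}. pcons (N - m*k) ` mary_nogap_partitions m k)"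
    using notin Pfin[OF m] by (simp)
  also have "card (\<Union>k\<in>{1..(N-1) div m}. pcons (N - m*k) ` mary_nogap_partitions m k)
     = (\<Sum>k=1..(N-1) div m. card (pcons (N - m*k) ` mary_nogap_partitions m k))"
    by (rule card_UN_disjoint) (use disj Pfin[OF m] in auto)
  also have "\<dots> = (\<Sum>k=1..(N-1) div m. c m k)"
    unfolding c_def by (rule sum.cong) (auto intro: card_image inj_on_subset[OF inj])
  finally show ?thesis .
qed



definition T :: "nat \<Rightarrow> nat \<Rightarrow> nat" where "T m q = 1 + (\<Sum>k=1..q. c m k)"

lemma c_T: "m \<ge> 2 \<Longrightarrow> N \<ge> 1 \<Longrightarrow> c m N = T m ((N-1) div m)"
  using Pcard unfolding T_def by simp

lemma T_Suc: "m \<ge> 2 \<Longrightarrow> T m (Suc q) = T m q + T m (q div m)"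
  unfolding T_def using c_T[of m "Suc q"] by (simp add: T_def)

lemma T_sum: "m \<ge> 2 \<Longrightarrow> T m q = 1 + (\<Sum>k<q. T m (k div m))"
  by (induction q) (auto simp: T_Suc, simp add: T_def)

lemma sum_div: "m > 0 \<Longrightarrow> (\<Sum>k<q. h (k div m)) = m * (\<Sum>p<q div m. h p) + (q mod m) * (h (q div m) :: nat)"
proof (induction q)
  case 0 then show ?case by simp
next
  case (Suc q)
  show ?case
  proof (cases "Suc (q mod m) = m")
    case True
    then have "Suc q mod m = 0" "Suc q div m = Suc (q div m)" by (simp_all add: mod_Suc div_Suc)
    moreover have "m * h (q div m) = h (q div m) + q mod m * h (q div m)"
      using True by (metis mult_Suc)
    ultimately show ?thesis using Suc by (simp add: algebra_simps)
  next
    case False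
    then have "Suc q mod m = Suc (q mod m)" "Suc q div m = q div m" by (simp_all add: mod_Suc div_Suc)
    then show ?thesis using Suc False by (simp add: algebra_simps)
  qed
qed

lemma T_cong: assumes "m \<ge> 2"
  shows "[int (T m q) = 1 + int (q mod m) * int (T m (q div m))] (mod int m)"
proof -
  have "T m q = 1 + (q mod m) * T m (q div m) + m * (\<Sum>p<q div m. T m p)"
    using T_sum[OF assms, of q] sum_div[where m=m and q=q and h="T m"] assms by simp
  then have "int (T m q) = 1 + int (q mod m) * int (T m (q div m)) + int m * int (\<Sum>p<q div m. T m p)"
    by simp
  then show ?thesis unfolding cong_iff_dvd_diff by simp
qed

fun Df :: "nat \<Rightarrow> nat \<Rightarrow> nat \<Rightarrow> int" where
  "Df m 0 q = 1" | "Df m (Suc K) q = 1 + int (q mod m) * Df m K (q div m)"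

lemma T_Df: assumes "m \<ge> 2" shows "q < m ^ K \<Longrightarrow> [int (T m q) = Df m K q] (mod int m)"
proof (induction K arbitrary: q)
  case 0
  then show ?case by (simp add: T_def)
next
  case (Suc K)
  have "q div m < m ^ K" using Suc.prems assms
    by (simp add: div_less_iff_less_mult mult.commute)
  then have "[int (T m (q div m)) = Df m K (q div m)] (mod int m)" using Suc.IH by blast
  then have "[1 + int (q mod m) * int (T m (q div m)) = 1 + int (q mod m) * Df m K (q div m)] (mod int m)"
    by (intro cong_add cong_mult cong_refl)
  then show ?case using T_cong[OF assms, of q] by (simp add: cong_trans)
qed

lemma digit0: "digit m n 0 = n mod m" by (simp add: digit_def)
lemma digitSuc: "digit m n (Suc l) = digit m (n div m) l"
  by (simp add: digit_def div_mult2_eq)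
lemma chiSuc: "l \<ge> 1 \<Longrightarrow> chi m n (Suc l) = chi m (n div m) l"
  unfolding chi_def using digitSuc[of m n "l - 1"] by simp
lemma chi1: "chi m n 1 = (if n mod m > 0 then 0 else 1)"
  by (simp add: chi_def digit0)

lemma chi1': "chi m n (Suc 0) = (if n mod m > 0 then 0 else 1)"
  using chi1 by simp

lemma shift: "(\<Sum>i=1..Suc K. \<Prod>l=1..i. f l) = (f 1 :: int) * (1 + (\<Sum>i=1..K. \<Prod>l=1..i. f (Suc l)))"
proof (induction K)
  case 0 then show ?case by simp
next
  case (Suc K)
  have "(\<Prod>l=1..Suc (Suc K). f l) = f 1 * (\<Prod>l=Suc 1..Suc (Suc K). f l)"
    by (rule prod.atLeast_Suc_atMost) simp
  also have "(\<Prod>l=Suc 1..Suc (Suc K). f l) = (\<Prod>l=1..Suc K. f (Suc l))"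
    by (rule prod.shift_bounds_cl_Suc_ivl)
  finally have "(\<Prod>l=1..Suc (Suc K). f l) = f 1 * (\<Prod>l=1..Suc K. f (Suc l))" .
  then show ?case using Suc by (simp add: algebra_simps)
qed

definition Q where "Q m K n = (\<Sum>i=1..K. \<Prod>l=1..i. (int (digit m n l) - chi m n l))"

lemma Qrec: "Q m (Suc K) n = (int ((n div m) mod m) - chi m n 1) * (1 + Q m K (n div m))"
proof -
  have "Q m (Suc K) n = (int (digit m n 1) - chi m n 1) *
     (1 + (\<Sum>i=1..K. \<Prod>l=1..i. (int (digit m n (Suc l)) - chi m n (Suc l))))"
    unfolding Q_def by (rule shift)
  also have "(\<Sum>i=1..K. \<Prod>l=1..i. (int (digit m n (Suc l)) - chi m n (Suc l))) = Q m K (n div m)"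
    unfolding Q_def
    by (intro sum.cong prod.cong refl) (auto simp: digitSuc chiSuc)
  finally show ?thesis using digitSuc[of m n 0] by (simp add: digit0)
qed

lemma L1: "n mod m > 0 \<Longrightarrow> 1 + Q m K n = Df m K (n div m)"
proof (induction K arbitrary: n)
  case 0 then show ?case by (simp add: Q_def)
next
  case (Suc K)
  show ?case
  proof (cases "(n div m) mod m > 0")
    case True
    then show ?thesis using Suc.IH[OF True] Suc.prems by (simp add: Qrec chi1 chi1')
  next
    case False
    then show ?thesis using Suc.prems by (simp add: Qrec chi1 chi1')
  qed
qed

lemma Mpos: assumes "m \<ge> 2" "n mod m > 0"
  shows "Df m (Suc K) (n - 1) = int (n mod m) + (int (n mod m) - 1) * Q m K n"
proof -
  define a b where "a = n div m" and "b = n mod m"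
  have nn: "n = b + a * m" unfolding a_def b_def by simp
  have e: "n - 1 = (b - 1) + a * m" using assms nn unfolding b_def by linarith
  have "b < m" using assms b_def by simp
  then have bm: "b - 1 < m" by linarith
  have a: "(n - 1) mod m = n mod m - 1" "(n - 1) div m = n div m"
    unfolding e using bm by (simp_all add: a_def b_def)
  have D: "Df m K (n div m) = 1 + Q m K n" using L1[OF assms(2), of K] by simp
  show ?thesis using a assms by (simp add: of_nat_diff algebra_simps D)
qed

lemma Mzero_facts: fixes m n :: nat assumes "m \<ge> 2" "n mod m = 0" "n \<ge> 1"
  shows "(n - 1) mod m = m - 1" "(n - 1) div m = n div m - 1" "n div m \<ge> 1"
proof -
  define a where "a = n div m"
  have nn: "n = a * m" unfolding a_def using div_mult_mod_eq[of n m] assms by simp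
  then have a1: "a \<ge> 1" using assms by (cases a) auto
  have e: "n - 1 = (m - 1) + (a - 1) * m" using nn a1 assms
    by (cases a) (auto simp: algebra_simps)
  have m0: "m \<noteq> 0" using assms by simp
  have "(n - 1) mod m = (m - 1) mod m" unfolding e by (rule mod_mult_self1)
  then show "(n - 1) mod m = m - 1" using assms by simp
  have "(n - 1) div m = (a - 1) + (m - 1) div m" unfolding e by (rule div_mult_self1[OF m0])
  then show "(n - 1) div m = n div m - 1" using assms a_def by simp
  show "n div m \<ge> 1" using a1 a_def by simp
qed

lemma M: assumes m: "m \<ge> 2"
  shows "n \<ge> 1 \<Longrightarrow> [Df m (Suc K) (n - 1) = int (n mod m) + (int (n mod m) - 1) * Q m K n] (mod int m)"
proof (induction K arbitrary: n)
  case 0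
  show ?case
  proof (cases "n mod m > 0")
    case True show ?thesis unfolding Mpos[OF m True] by simp
  next
    case False
    then have z: "n mod m = 0" by simp
    note f = Mzero_facts[OF m z 0]
    have "Df m (Suc 0) (n - 1) = int m" using f m by (simp add: of_nat_diff)
    then show ?thesis using z by (simp add: Q_def cong_iff_dvd_diff)
  qed
next
  case (Suc K)
  show ?case
  proof (cases "n mod m > 0")
    case True show ?thesis unfolding Mpos[OF m True] by simp
  next
    case False
    then have z: "n mod m = 0" by simp
    note f = Mzero_facts[OF m z Suc.prems]
    define n' where "n' = n div m"
    define X where "X = Df m (Suc K) (n' - 1)"
    have IH: "[X = int (n' mod m) + (int (n' mod m) - 1) * Q m K n'] (mod int m)"
      using Suc.IH f unfolding X_def n'_def by blast
    then obtain t where t: "X = int (n' mod m) + (int (n' mod m) - 1) * Q m K n' + int m * t"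
      unfolding cong_iff_lin by (metis add.commute cong_iff_lin cong_sym)
    have L: "Df m (Suc (Suc K)) (n - 1) = 1 + (int m - 1) * X"
      using f m unfolding X_def n'_def by (simp add: of_nat_diff)
    have R: "Q m (Suc K) n = (int (n' mod m) - 1) * (1 + Q m K n')"
      using z unfolding n'_def by (simp add: Qrec chi1 chi1')
    have eq: "(1 + (int m - 1) * X) - (int 0 + (int 0 - 1) * ((int (n' mod m) - 1) * (1 + Q m K n')))
       = int m * (X - t)"
      using t by (simp add: algebra_simps)
    show ?thesis unfolding L R z cong_iff_dvd_diff eq by simp
  qed
qed

lemma final: assumes m: "m \<ge> 2" and n: "0 < n" and "n < m ^ (j + 1)"
  shows "[int (c m (m * n)) = int (digit m n 0) + (int (digit m n 0) - 1) *
            (\<Sum>i=1..j. \<Prod>l=1..i. (int (digit m n l) - chi m n l))] (mod int m)"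
proof -
  have "(m * n - 1) div m = n - 1"
    using Mzero_facts(2)[of m "m*n"] m n by simp
  then have c: "c m (m * n) = T m (n - 1)" using c_T[of m "m*n"] m n by simp
  have "n - 1 < m ^ Suc j" using assms by simp
  then have "[int (T m (n - 1)) = Df m (Suc j) (n - 1)] (mod int m)" using T_Df[OF m] by blast
  moreover have "[Df m (Suc j) (n - 1) = int (n mod m) + (int (n mod m) - 1) * Q m j n] (mod int m)"
    using M[OF m, of n j] n by simp
  ultimately show ?thesis unfolding c Q_def digit0 by (rule cong_trans)
qed


theorem theorem1p4:
  fixes m n j :: nat
  assumes "m \<ge> 2" and "0 < n" and "m ^ j \<le> n" and "n < m ^ (j + 1)"
  shows "[int (c m (m * n)) = int (digit m n 0) + (int (digit m n 0) - 1) *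
            (\<Sum>i=1..j. \<Prod>l=1..i. (int (digit m n l) - chi m n l))] (mod int m)"
  using final[OF assms(1,2,4)] .

end
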